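(* Let $\gamma:[0,1]\to\mathbb{R}_+$ be a differentiable increasing function with $\gamma(x)>0$ for $x>0$, and assume $\lim_{x\downarrow0}x\gamma'(x)/\gamma(x)=0$. Then $$\lim_{x\downarrow0}\frac{1}{\gamma(x)}\int_0^{1/2}\gamma(xy)\frac{dy}{y\sqrt{\log(1/y)}}=\infty .$$ *)

theory Defs
  imports "HOL-Analysis.Analysis"
begin

end

theory Submission imports Defs begin

lemma slow:
  fixes \<gamma> :: "real \<Rightarrow> real" and a :: real
  assumes diff: "\<gamma> differentiable_on {0..1}"
    and pos: "\<And>x. x \<in> {0<..1} \<Longrightarrow> \<gamma> x > 0"
    and lim: "((\<lambda>x. x * deriv \<gamma> x / \<gamma> x) \<longlongrightarrow> 0) (at_right 0)"
    and a: "0 < a" "a < 1"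
  shows "eventually (\<lambda>x. \<gamma> x \<le> exp (1/2) * \<gamma> (a * x)) (at_right 0)"
proof -
  have "eventually (\<lambda>x. dist (x * deriv \<gamma> x / \<gamma> x) 0 < a/2) (at_right 0)"
    using lim a unfolding tendsto_iff by (meson half_gt_zero)
  then obtain b where b: "b > 0" and bb: "\<And>y. y > 0 \<Longrightarrow> y < b \<Longrightarrow> \<bar>y * deriv \<gamma> y / \<gamma> y\<bar> < a/2"
    unfolding eventually_at_right_field by auto
  have "eventually (\<lambda>x. x < min b 1) (at_right (0::real))"
    using b unfolding eventually_at_right_field by (intro exI[of _ "min b 1"]) auto
  moreover have "eventually (\<lambda>x. x > 0) (at_right (0::real))"
    unfolding eventually_at_right_field by (intro exI[of _ 1]) auto
  ultimately show ?thesis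
  proof eventually_elim
    case (elim x)
    have der: "DERIV (\<lambda>t. ln (\<gamma> t)) t :> deriv \<gamma> t / \<gamma> t" if t: "a*x \<le> t" "t \<le> x" for t
    proof -
      have t0: "0 < t" "t < 1" using t elim a by (auto intro: less_le_trans[OF mult_pos_pos])
      have "\<gamma> differentiable (at t within {0..1})" using diff t0 by (auto simp: differentiable_on_def)
      hence "\<gamma> differentiable (at t)" using at_within_Icc_at[of 0 t 1] t0 by simp
      hence d: "DERIV \<gamma> t :> deriv \<gamma> t" by (simp add: DERIV_deriv_iff_real_differentiable)
      have "\<gamma> t > 0" using pos t0 by auto
      show ?thesis using d \<open>\<gamma> t > 0\<close> by (auto intro!: derivative_eq_intros)
    qed
    have ax: "a*x < x" using a elim by simp
    obtain z where z: "a*x < z" "z < x" and eq: "ln (\<gamma> x) - ln (\<gamma> (a*x)) = (x - a*x) * (deriv \<gamma> z / \<gamma> z)"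
      using MVT2[OF ax der] by blast
    have z0: "z > 0" using z a elim by (meson less_trans mult_pos_pos)
    have "\<bar>z * deriv \<gamma> z / \<gamma> z\<bar> < a/2" using bb z z0 elim by auto
    have "(x - a*x) * (deriv \<gamma> z / \<gamma> z) = ((x - a*x)/z) * (z * deriv \<gamma> z / \<gamma> z)"
      using z0 pos[of z] z elim by (simp add: field_simps)
    also have "\<dots> \<le> ((x - a*x)/z) * \<bar>z * deriv \<gamma> z / \<gamma> z\<bar>"
      using z0 ax by (intro mult_left_mono abs_ge_self) auto
    also have "\<dots> \<le> (1/a) * (a/2)"
    proof (rule mult_mono)
      show "(x - a*x)/z \<le> 1/a" using z0 z a elim by (simp add: field_simps) (smt (verit) mult_nonneg_nonneg)
    qed (use \<open>\<bar>z * deriv \<gamma> z / \<gamma> z\<bar> < a/2\<close> a in auto)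
    also have "\<dots> = 1/2" using a by simp
    finally have "ln (\<gamma> x) \<le> ln (\<gamma> (a*x)) + 1/2" using eq by linarith
    hence ex: "exp (ln (\<gamma> x)) \<le> exp (ln (\<gamma> (a*x)) + 1/2)" by simp
    have "a*x \<le> 1" using ax elim by linarith
    moreover have "a*x > 0" using a elim by simp
    ultimately have "\<gamma> (a*x) > 0" using pos by auto
    moreover have "\<gamma> x > 0" using pos elim by auto
    ultimately show ?case using ex by (simp add: exp_add mult.commute)
  qed
qed

lemma integ:
  fixes a :: real
  assumes a: "0 < a" "a \<le> 1/2"
  shows "(\<integral>\<^sup>+ y. ennreal (1 / (y * sqrt (ln (1/y)))) * indicator {a..1/2} y \<partial>lborel)
         = ennreal (2 * sqrt (ln (1/a)) - 2 * sqrt (ln 2))"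
proof -
  have "(\<integral>\<^sup>+ y. ennreal (1 / (y * sqrt (ln (1/y)))) * indicator {a..1/2} y \<partial>lborel)
      = ennreal ((\<lambda>y. - 2 * sqrt (ln (1/y))) (1/2) - (\<lambda>y. - 2 * sqrt (ln (1/y))) a)"
  proof (rule nn_integral_FTC_Icc)
    show "(\<lambda>y. 1 / (y * sqrt (ln (1/y)))) \<in> borel_measurable borel" by measurable
  next
    fix y assume y: "y \<in> {a..1/2}"
    have y0: "0 < y" "y \<le> 1/2" using y a by auto
    have l: "ln (1/y) > 0" using y0 by (simp add: ln_div)
    show "0 \<le> 1 / (y * sqrt (ln (1/y)))" using y0 l by simp
    show "DERIV (\<lambda>y. - 2 * sqrt (ln (1/y))) y :> 1 / (y * sqrt (ln (1/y)))"
      using y0 l by (auto intro!: derivative_eq_intros simp: field_simps)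
  qed (use a in auto)
  also have "\<dots> = ennreal (2 * sqrt (ln (1/a)) - 2 * sqrt (ln 2))" by simp
  finally show ?thesis .
qed

theorem proposition2p10:
  fixes \<gamma> :: "real \<Rightarrow> real"
  assumes diff: "\<gamma> differentiable_on {0..1}"
    and incr: "mono_on {0..1} \<gamma>"
    and nonneg: "\<And>x. x \<in> {0..1} \<Longrightarrow> \<gamma> x \<ge> 0"
    and pos: "\<And>x. x \<in> {0<..1} \<Longrightarrow> \<gamma> x > 0"
    and lim: "((\<lambda>x. x * deriv \<gamma> x / \<gamma> x) \<longlongrightarrow> 0) (at_right 0)"
  shows "((\<lambda>x. ennreal (1 / \<gamma> x) *
            (\<integral>\<^sup>+ y \<in> {0..1/2}. ennreal (\<gamma> (x * y) / (y * sqrt (ln (1 / y)))) \<partial>lborel))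
          \<longlongrightarrow> \<infinity>) (at_right 0)"
  unfolding order_tendsto_iff
proof (intro conjI allI impI)
  fix u :: ennreal assume "u > \<infinity>" thus "eventually (\<lambda>x. ennreal (1 / \<gamma> x) *
            (\<integral>\<^sup>+ y \<in> {0..1/2}. ennreal (\<gamma> (x * y) / (y * sqrt (ln (1 / y)))) \<partial>lborel) < u) (at_right 0)" by simp
next
  fix l :: ennreal assume "l < \<infinity>"
  define r where "r = enn2real l"
  have lr: "l = ennreal r" using \<open>l < \<infinity>\<close> unfolding r_def by simp
  have r0: "r \<ge> 0" unfolding r_def by simp
  define s where "s = r * exp (1/2) / 2 + sqrt (ln 2) + 1"
  have s1: "s \<ge> 1" unfolding s_def using r0 by simp
  define a where "a = exp (- (s^2))"
  have a0: "a > 0" unfolding a_def by simp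
  have ln2: "ln (2::real) < 1" by (rule ln_2_less_1)
  have "s^2 \<ge> 1" using s1 by (simp add: one_le_power)
  hence "- (s^2) < ln (1/2)" using ln2 by (simp add: ln_div)
  hence "a < 1/2" unfolding a_def by (metis exp_less_cancel_iff exp_ln zero_less_divide_1_iff zero_less_numeral)
  have lna: "sqrt (ln (1/a)) = s" unfolding a_def using s1 by (simp add: ln_div)
  have I: "(\<integral>\<^sup>+ y. ennreal (1 / (y * sqrt (ln (1/y)))) * indicator {a..1/2} y \<partial>lborel)
         = ennreal (r * exp (1/2) + 2)"
    using integ[of a] a0 \<open>a < 1/2\<close> lna unfolding s_def by (simp add: algebra_simps)
  have ev1: "eventually (\<lambda>x. \<gamma> x \<le> exp (1/2) * \<gamma> (a * x)) (at_right 0)"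
    using slow[OF diff pos lim a0] \<open>a < 1/2\<close> by simp
  have ev2: "eventually (\<lambda>x. 0 < x \<and> x < 1) (at_right (0::real))"
    unfolding eventually_at_right_field by (intro exI[of _ 1]) auto
  from ev1 ev2 show "eventually (\<lambda>x. l < ennreal (1 / \<gamma> x) *
            (\<integral>\<^sup>+ y \<in> {0..1/2}. ennreal (\<gamma> (x * y) / (y * sqrt (ln (1 / y)))) \<partial>lborel)) (at_right 0)"
  proof eventually_elim
    case (elim x)
    have gx: "\<gamma> x > 0" using pos elim by auto
    have "a*x \<le> 1" using elim a0 \<open>a < 1/2\<close> by (intro mult_le_one) auto
    hence gax: "\<gamma> (a*x) > 0" using pos[of "a*x"] elim a0 by auto
    have "(\<integral>\<^sup>+ y. ennreal (\<gamma> (a*x)) * (ennreal (1 / (y * sqrt (ln (1/y)))) * indicator {a..1/2} y) \<partial>lborel)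
       \<le> (\<integral>\<^sup>+ y \<in> {0..1/2}. ennreal (\<gamma> (x * y) / (y * sqrt (ln (1 / y)))) \<partial>lborel)"
    proof (rule nn_integral_mono)
      fix y
      show "ennreal (\<gamma> (a*x)) * (ennreal (1 / (y * sqrt (ln (1/y)))) * indicator {a..1/2} y)
          \<le> ennreal (\<gamma> (x * y) / (y * sqrt (ln (1 / y)))) * indicator {0..1/2} y"
      proof (cases "y \<in> {a..1/2}")
        case True
        have y0: "0 < y" "y \<le> 1/2" using True a0 by auto
        have l: "ln (1/y) > 0" using y0 by (simp add: ln_div)
        have "\<gamma> (a*x) \<le> \<gamma> (x*y)"
        proof (rule mono_onD[OF incr])
          show "a*x \<in> {0..1}" using elim a0 \<open>a < 1/2\<close> by (auto intro: mult_le_one)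
          show "x*y \<in> {0..1}" using elim y0 by (auto intro: mult_le_one)
          show "a*x \<le> x*y" using True elim by (simp add: mult.commute mult_left_mono)
        qed
        hence "\<gamma> (a*x) * (1 / (y * sqrt (ln (1/y)))) \<le> \<gamma> (x * y) / (y * sqrt (ln (1 / y)))"
          using y0 l by (simp add: divide_right_mono)
        hence "ennreal (\<gamma> (a*x) * (1 / (y * sqrt (ln (1/y))))) \<le> ennreal (\<gamma> (x * y) / (y * sqrt (ln (1 / y))))"
          by (rule ennreal_leI)
        moreover have "ennreal (\<gamma> (a*x)) * ennreal (1 / (y * sqrt (ln (1/y)))) = ennreal (\<gamma> (a*x) * (1 / (y * sqrt (ln (1/y)))))"
          using gax y0 l by (intro ennreal_mult[symmetric]) auto
        ultimately show ?thesis using True y0 by (simp del: times_divide_eq_right)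
      qed simp
    qed
    note calc = this
    have "(\<integral>\<^sup>+ y. ennreal (\<gamma> (a*x)) * (ennreal (1 / (y * sqrt (ln (1/y)))) * indicator {a..1/2} y) \<partial>lborel)
        = ennreal (\<gamma> (a*x)) * ennreal (r * exp (1/2) + 2)"
      by (subst nn_integral_cmult) (auto simp: I)
    have R: "r < (1 / \<gamma> x) * (\<gamma> (a*x) * (r * exp (1/2) + 2))"
    proof -
      have "r < r + 2 * exp (-1/2)" by simp
      also have "r + 2 * exp (-1/2) = exp (-1/2) * (r * exp (1/2) + 2)"
        by (simp add: algebra_simps flip: exp_add)
      also have "\<dots> \<le> (1 / \<gamma> x) * (\<gamma> (a*x) * (r * exp (1/2) + 2))"
      proof -
        have "exp (-1/2) \<le> \<gamma> (a*x) / \<gamma> x"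
          using elim(1) gx gax by (simp add: field_simps exp_minus)
        hence "exp (-1/2) * (r * exp (1/2) + 2) \<le> (\<gamma> (a*x) / \<gamma> x) * (r * exp (1/2) + 2)"
          using r0 by (intro mult_right_mono) auto
        thus ?thesis by simp
      qed
      finally show ?thesis .
    qed
    have "l < ennreal ((1 / \<gamma> x) * (\<gamma> (a*x) * (r * exp (1/2) + 2)))"
      unfolding lr using R r0 by (simp add: ennreal_lessI)
    also have "ennreal ((1 / \<gamma> x) * (\<gamma> (a*x) * (r * exp (1/2) + 2)))
        = ennreal (1 / \<gamma> x) * (ennreal (\<gamma> (a*x)) * ennreal (r * exp (1/2) + 2))"
      using gx gax r0 by (subst ennreal_mult[symmetric], simp, simp, subst ennreal_mult[symmetric]) auto
    also have "\<dots> \<le> ennreal (1 / \<gamma> x) *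
            (\<integral>\<^sup>+ y \<in> {0..1/2}. ennreal (\<gamma> (x * y) / (y * sqrt (ln (1 / y)))) \<partial>lborel)"
      using calc \<open>_ = ennreal (\<gamma> (a*x)) * ennreal (r * exp (1/2) + 2)\<close>
      by (intro mult_left_mono) auto
    finally show ?case .
  qed
qed

end
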